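(* Let $(\Omega,\mathcal{F},(\mathcal{F}_t)_{t\ge 0},\mathbb{P})$ be a filtered probability space, let $n\ge 1$, and for each $k\in\{1,\dots,n\}$ let $(B^{(k)}_t)_{t\ge 0}$ be a standard $(\mathcal{F}_t)$-Brownian motion (adapted to $(\mathcal{F}_t)$, with $B^{(k)}_{t+s}-B^{(k)}_t$ independent of $\mathcal{F}_t$ for all $s,t\ge 0$), let $a_k,\sigma_k\in\mathbb{R}$, and set $X^{*(k)}_t=\sigma_k tB^{(k)}_t + a_k t$ (so $X^{*(k)}_0=0$ and $X^{*(k)}_t$ is $\mathcal{F}_t$-measurable). Let $c_1,\dots,c_n\in\mathbb{R}$ be arbitrary constants and put $S_t=\sum_{k=1}^n c_k X^{*(k)}_t$. Then for every $t>0$ with $S_t\neq 0$ and every $s\ge 0$, $$E(S_{t+s}-S_t\mid\mathcal{F}_t)=\frac{s}{t}S_t\quad\text{a.s.},$$ i.e. $(S_t)_{t>0}$ is a process with proportional increments.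
   Context: A process $(N_t)_{t>0}$ adapted to a filtration $(\mathcal{F}_t)$ has proportional increments if for all $t>0$ with $N_t\neq 0$ and all $s\ge 0$: $E(N_{t+s}-N_t\mid\mathcal{F}_t)=\frac{s}{t}N_t$ almost surely. *)

theory Defs
  imports "HOL-Probability.Probability"
begin

definition filtered_prob_space :: "'a measure \<Rightarrow> (real \<Rightarrow> 'a measure) \<Rightarrow> bool" where
  "filtered_prob_space M F \<longleftrightarrow>
     prob_space M \<and>
     (\<forall>t\<ge>0. subalgebra M (F t)) \<and>
     (\<forall>s t. 0 \<le> s \<longrightarrow> s \<le> t \<longrightarrow> sets (F s) \<subseteq> sets (F t))"

definition std_F_brownian_motion ::
  "'a measure \<Rightarrow> (real \<Rightarrow> 'a measure) \<Rightarrow> (real \<Rightarrow> 'a \<Rightarrow> real) \<Rightarrow> bool" where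
  "std_F_brownian_motion M F B \<longleftrightarrow>
     (\<forall>t\<ge>0. B t \<in> borel_measurable (F t)) \<and>
     (AE \<omega> in M. B 0 \<omega> = 0) \<and>
     (AE \<omega> in M. continuous_on {0..} (\<lambda>t. B t \<omega>)) \<and>
     (\<forall>t\<ge>0. \<forall>s>0. distributed M lborel (\<lambda>\<omega>. B (t + s) \<omega> - B t \<omega>)
                                   (normal_density 0 (sqrt s))) \<and>
     (\<forall>t\<ge>0. \<forall>s\<ge>0. prob_space.indep_set M (sets (F t))
        (sets (vimage_algebra (space M) (\<lambda>\<omega>. B (t + s) \<omega> - B t \<omega>) borel)))"

definition proportional_increments ::
  "'a measure \<Rightarrow> (real \<Rightarrow> 'a measure) \<Rightarrow> (real \<Rightarrow> 'a \<Rightarrow> real) \<Rightarrow> bool" where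
  "proportional_increments M F N \<longleftrightarrow>
     (\<forall>t>0. N t \<in> borel_measurable (F t)) \<and>
     (\<forall>t>0. \<forall>s\<ge>0. (\<exists>\<omega>\<in>space M. N t \<omega> \<noteq> 0) \<longrightarrow>
        (AE \<omega> in M. real_cond_exp M (F t) (\<lambda>x. N (t + s) x - N t x) \<omega> = s / t * N t \<omega>))"

end

theory Submission
  imports Defs
begin

lemma (in prob_space) indep_set_mono_aux:
  assumes "indep_set A B" "A' \<subseteq> A" "B' \<subseteq> B"
  shows "indep_set A' B'"
  using assms unfolding indep_sets2_eq by blast

lemma bm_incr:
  assumes FP: "filtered_prob_space M F" and BM: "std_F_brownian_motion M F B"
    and t: "t \<ge> 0" and s: "s \<ge> 0"
  shows "integrable M (\<lambda>\<omega>. B (t + s) \<omega> - B t \<omega>)"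
    and "\<And>A. A \<in> sets (F t) \<Longrightarrow> (\<integral>\<omega>. indicator A \<omega> * (B (t + s) \<omega> - B t \<omega>) \<partial>M) = 0"
proof -
  interpret prob_space M using FP unfolding filtered_prob_space_def by auto
  have sub: "\<And>u. u \<ge> 0 \<Longrightarrow> subalgebra M (F u)" using FP unfolding filtered_prob_space_def by auto
  have measB: "\<And>u. u \<ge> 0 \<Longrightarrow> B u \<in> borel_measurable M"
    using BM sub unfolding std_F_brownian_motion_def by (meson measurable_from_subalg)
  let ?D = "\<lambda>\<omega>. B (t + s) \<omega> - B t \<omega>"
  have Dm: "?D \<in> borel_measurable M" using measB t s by auto
  have intD: "integrable M ?D \<and> (\<integral>\<omega>. ?D \<omega> \<partial>M) = 0"
  proof (cases "s = 0")
    case True then show ?thesis by simp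
  next
    case False
    then have sp: "s > 0" using s by simp
    have dist: "distributed M lborel ?D (normal_density 0 (sqrt s))"
      using BM t sp unfolding std_F_brownian_motion_def by blast
    have "integrable M ?D"
      by (rule distributed_integrable_var[OF dist]) (use integrable_normal_moment_nz_1[of "sqrt s" 0] sp in \<open>auto simp: normal_density_nonneg\<close>)
    moreover have "expectation ?D = 0"
      by (rule normal_distributed_expectation[OF _ dist]) (use sp in simp)
    ultimately show ?thesis by simp
  qed
  then show "integrable M ?D" by simp
  fix A assume A: "A \<in> sets (F t)"
  have Ameas: "indicator A \<in> borel_measurable (F t)" using A by simp
  have AM: "A \<in> sets M" using A sub[OF t] unfolding subalgebra_def by auto
  have ind: "indep_set (sets (F t)) (sets (vimage_algebra (space M) ?D borel))"
    using BM t s unfolding std_F_brownian_motion_def by blast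
  have "indep_var borel (indicator A) borel ?D"
    unfolding indep_var_eq
  proof (intro conjI)
    show "random_variable borel (indicator A :: 'a \<Rightarrow> real)" using AM by simp
    show "random_variable borel ?D" using Dm by simp
    show "indep_set (sigma_sets (space M) {(indicator A :: 'a \<Rightarrow> real) -` X \<inter> space M |X. X \<in> sets borel})
       (sigma_sets (space M) {?D -` X \<inter> space M |X. X \<in> sets borel})"
    proof (rule indep_set_mono_aux[OF ind])
      have sp: "space (F t) = space M" using sub[OF t] unfolding subalgebra_def by auto
      have G: "{(indicator A :: 'a \<Rightarrow> real) -` X \<inter> space M |X. X \<in> sets borel} \<subseteq> sets (F t)"
      proof safe
        fix X :: "real set" assume "X \<in> sets borel"
        then have "indicator A -` X \<inter> space (F t) \<in> sets (F t)" by (rule measurable_sets[OF Ameas])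
        then show "indicator A -` X \<inter> space M \<in> sets (F t)" using sp by simp
      qed
      show "sigma_sets (space M) {(indicator A :: 'a \<Rightarrow> real) -` X \<inter> space M |X. X \<in> sets borel} \<subseteq> sets (F t)"
        using sets.sigma_sets_subset[OF G] sp by simp
      show "sigma_sets (space M) {?D -` X \<inter> space M |X. X \<in> sets borel} \<subseteq> sets (vimage_algebra (space M) ?D borel)"
        by (simp add: sets_vimage_algebra)
    qed
  qed
  then have "(\<integral>\<omega>. indicator A \<omega> * ?D \<omega> \<partial>M) = (\<integral>\<omega>. indicator A \<omega> \<partial>M) * (\<integral>\<omega>. ?D \<omega> \<partial>M)"
    proof (rule indep_var_lebesgue_integral)
    show "integrable M (indicator A :: 'a \<Rightarrow> real)" using AM by (auto intro!: integrable_real_indicator simp: emeasure_eq_measure)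
    show "integrable M ?D" using intD by simp
  qed
  then show "(\<integral>\<omega>. indicator A \<omega> * ?D \<omega> \<partial>M) = 0" using intD by simp
qed

theorem mainTheorem4:
  fixes M :: "'a measure" and F :: "real \<Rightarrow> 'a measure"
    and n :: nat and B :: "nat \<Rightarrow> real \<Rightarrow> 'a \<Rightarrow> real"
    and a \<sigma> c :: "nat \<Rightarrow> real"
  assumes "filtered_prob_space M F"
    and "n \<ge> 1"
    and "\<And>k. k \<in> {1..n} \<Longrightarrow> std_F_brownian_motion M F (B k)"
  shows "proportional_increments M F
           (\<lambda>t \<omega>. \<Sum>k = 1..n. c k * (\<sigma> k * t * B k t \<omega> + a k * t))"
proof -
  note FP = assms(1) and BM = assms(3)
  interpret prob_space M using FP unfolding filtered_prob_space_def by auto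
  have sub: "\<And>u. u \<ge> 0 \<Longrightarrow> subalgebra M (F u)" using FP unfolding filtered_prob_space_def by auto
  define N where "N = (\<lambda>t \<omega>. \<Sum>k = 1..n. c k * (\<sigma> k * t * B k t \<omega> + a k * t))"
  have measF: "B k u \<in> borel_measurable (F u)" if "k \<in> {1..n}" "u \<ge> 0" for k u
    using BM[OF that(1)] that(2) unfolding std_F_brownian_motion_def by blast
  have measB: "B k u \<in> borel_measurable M" if "k \<in> {1..n}" "u \<ge> 0" for k u
    using measF[OF that] sub[OF that(2)] by (meson measurable_from_subalg)
  have intB: "integrable M (B k u)" if k: "k \<in> {1..n}" and u: "u \<ge> 0" for k u
  proof -
    have m0: "B k 0 \<in> borel_measurable M" using measB[OF k] by simp
    have ae0: "AE \<omega> in M. B k 0 \<omega> = 0" using BM[OF k] unfolding std_F_brownian_motion_def by blast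
    have i0: "integrable M (B k 0)"
      using integrable_cong_AE[OF m0 borel_measurable_const[of 0] ae0] by simp
    have "integrable M (\<lambda>\<omega>. B k (0 + u) \<omega> - B k 0 \<omega>)"
      using bm_incr(1)[OF FP BM[OF k], of 0 u] u by simp
    then have "integrable M (\<lambda>\<omega>. (B k (0 + u) \<omega> - B k 0 \<omega>) + B k 0 \<omega>)"
      using i0 by (intro Bochner_Integration.integrable_add)
    then show ?thesis by simp
  qed
  have intN: "integrable M (N u)" if u: "u \<ge> 0" for u
    unfolding N_def using intB u by (auto intro!: integrable_sum integrable_add integrable_mult_right)
  have measN: "N u \<in> borel_measurable (F u)" if u: "u \<ge> 0" for u
    unfolding N_def using measF u by (auto intro!: borel_measurable_sum borel_measurable_add borel_measurable_times)
  have "N t \<in> borel_measurable (F t)" if "t > 0" for t using measN that by simp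
  moreover have "AE \<omega> in M. real_cond_exp M (F t) (\<lambda>x. N (t + s) x - N t x) \<omega> = s / t * N t \<omega>"
    if t: "t > 0" and s: "s \<ge> 0" for t s
  proof -
    interpret sigma_finite_subalgebra M "F t"
      by (rule finite_measure_subalgebra_is_sigma_finite)
         (simp add: finite_measure_subalgebra_def finite_measure_subalgebra_axioms_def sub t finite_measure_axioms less_imp_le)
    let ?D = "\<lambda>k x. B k (t + s) x - B k t x"
    have key: "N (t + s) x - N t x = s / t * N t x + (\<Sum>k = 1..n. (c k * \<sigma> k * (t + s)) * ?D k x)" for x
    proof -
      have "N (t + s) x - N t x - s / t * N t x =
         (\<Sum>k = 1..n. c k * (\<sigma> k * (t + s) * B k (t + s) x + a k * (t + s)) - c k * (\<sigma> k * t * B k t x + a k * t)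
            - s / t * (c k * (\<sigma> k * t * B k t x + a k * t)))"
        unfolding N_def by (simp add: sum_subtractf sum_distrib_left)
      also have "\<dots> = (\<Sum>k = 1..n. (c k * \<sigma> k * (t + s)) * ?D k x)"
        using t by (intro sum.cong refl) (simp add: field_simps)
      finally show ?thesis by simp
    qed
    show ?thesis
    proof (rule real_cond_exp_charact)
      show "integrable M (\<lambda>x. N (t + s) x - N t x)" using intN t s by auto
      show "integrable M (\<lambda>x. s / t * N t x)" using intN t by auto
      show "(\<lambda>x. s / t * N t x) \<in> borel_measurable (F t)" using measN t by auto
      fix A assume A: "A \<in> sets (F t)"
      have AM: "A \<in> sets M" using A sub[of t] t unfolding subalgebra_def by auto
      have intAD: "integrable M (\<lambda>x. indicator A x * ?D k x)" if k: "k \<in> {1..n}" for k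
        using integrable_mult_indicator[OF AM bm_incr(1)[OF FP BM[OF k], of t s]] t s by simp
      have zAD: "(\<integral>x. indicator A x * ?D k x \<partial>M) = 0" if k: "k \<in> {1..n}" for k
        using bm_incr(2)[OF FP BM[OF k], of t s A] A t s by simp
      have intAg0: "integrable M (\<lambda>x. indicator A x * N t x)"
        using integrable_mult_indicator[OF AM intN[of t]] t by simp
      have intAg: "integrable M (\<lambda>x. indicator A x * (s / t * N t x))"
        using Bochner_Integration.integrable_mult_right[OF intAg0, of "s / t"] by (simp add: ac_simps)
      have "(\<integral>x\<in>A. (N (t + s) x - N t x) \<partial>M) = (\<integral>x. indicator A x * (s / t * N t x)
           + (\<Sum>k = 1..n. (c k * \<sigma> k * (t + s)) * (indicator A x * ?D k x)) \<partial>M)"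
        unfolding set_lebesgue_integral_def key
        by (intro Bochner_Integration.integral_cong refl) (simp add: algebra_simps sum_distrib_left)
      also have "\<dots> = (\<integral>x. indicator A x * (s / t * N t x) \<partial>M)
           + (\<integral>x. (\<Sum>k = 1..n. (c k * \<sigma> k * (t + s)) * (indicator A x * ?D k x)) \<partial>M)"
        using intAg intAD by (intro Bochner_Integration.integral_add) auto
      also have "(\<integral>x. (\<Sum>k = 1..n. (c k * \<sigma> k * (t + s)) * (indicator A x * ?D k x)) \<partial>M) = 0"
      proof -
        have "(\<integral>x. (\<Sum>k = 1..n. (c k * \<sigma> k * (t + s)) * (indicator A x * ?D k x)) \<partial>M)
            = (\<Sum>k = 1..n. (\<integral>x. (c k * \<sigma> k * (t + s)) * (indicator A x * ?D k x) \<partial>M))"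
          by (rule Bochner_Integration.integral_sum, rule Bochner_Integration.integrable_mult_right, rule intAD, simp)
        also have "\<dots> = 0" using zAD by simp
        finally show ?thesis .
      qed
      finally show "(\<integral>x\<in>A. (N (t + s) x - N t x) \<partial>M) = (\<integral>x\<in>A. s / t * N t x \<partial>M)"
        unfolding set_lebesgue_integral_def by simp
    qed
  qed
  ultimately show ?thesis unfolding proportional_increments_def N_def[symmetric] by blast
qed

end
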